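(* In the setting below, suppose $\max_{g\in G_-}|\delta(g)|=E_k-\lfloor E_k\rfloor_2$. Then $|G_-|\ge \frac{|\mathrm{Co}_0|}{2}\bigl(\lceil E_k\rceil_2-E_k\bigr)$.
   Context: Let $\Lambda_{24}$ be the Leech lattice scaled so minimal vectors have length $2$, $\mathcal C$ its $196560$ minimal vectors, and $\mathrm{Co}_0$ the finite group of linear isometries of $\mathbb{R}^{24}$ mapping $\Lambda_{24}$ onto itself (acting transitively on $\mathcal C$). Fix an antipodal ($S=-S$) set $S\subseteq\mathcal C$ with $\langle x,y\rangle\le1$ for distinct $x,y\in S$. Let $k\ge1$, $S_1=S$, $g_1=\mathrm{id}$, and for $2\le j\le k$, $S_j=g_jS\setminus(S_1\cup\dots\cup S_{j-1})$ for some $g_j\in\mathrm{Co}_0$, with $|S_j|\ge|S|\bigl(1-\sum_{i<j}|S_i|/|\mathcal C|\bigr)$. Put $U_k=S_1\cup\dots\cup S_k$, $E_k=\mathbb{E}_g|gS\cap U_k|$ ($g$ uniform in $\mathrm{Co}_0$). $\lfloor x\rfloor_2$ (resp. $\lceil x\rceil_2$) is the greatest even integer $\le x$ (resp. least even integer $\ge x$). $\delta(g)=|gS\cap U_k|-E_k$, $G_-=\{g:\delta(g)<0\}$. *)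

theory Defs
  imports "HOL-Analysis.Analysis" "HOL-Library.Numeral_Type"
begin

text \<open>Cyclic binary Golay code of length 23, generated by the cyclic shifts of
  g(x) = 1 + x^2 + x^4 + x^5 + x^6 + x^10 + x^11 (codewords as supports in {0..22}),
  extended by a parity coordinate 23 to the extended Golay code of length 24.\<close>

definition golay_gen :: "nat set" where
  "golay_gen = {0, 2, 4, 5, 6, 10, 11}"

definition cshift :: "nat \<Rightarrow> nat set" where
  "cshift j = (\<lambda>i. (i + j) mod 23) ` golay_gen"

inductive_set golay23 :: "nat set set" where
  zero: "{} \<in> golay23"
| add: "A \<in> golay23 \<Longrightarrow> j < 23 \<Longrightarrow> (A - cshift j) \<union> (cshift j - A) \<in> golay23"

definition golay24 :: "nat set set" where
  "golay24 = {A \<union> (if odd (card A) then {23} else {}) | A. A \<in> golay23}"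

text \<open>The Leech lattice (Conway--Sloane construction), scaled by 1/sqrt 8 so that
  minimal vectors have length 2. Coordinate i < 24 is x \$ of_nat i.\<close>

definition leech :: "(real ^ 24) set" where
  "leech = {x. \<exists>(z :: nat \<Rightarrow> int) (m :: int).
      (\<forall>i<24. x $ (of_nat i) = real_of_int (z i) / sqrt 8 \<and> z i mod 2 = m mod 2)
    \<and> (\<Sum>i<24. z i) mod 8 = (4 * m) mod 8
    \<and> (\<forall>\<nu> :: int. {i. i < 24 \<and> z i mod 4 = \<nu> mod 4} \<in> golay24)}"

definition leech_min :: "(real ^ 24) set" where
  "leech_min = {x \<in> leech. x \<noteq> 0 \<and> (\<forall>y \<in> leech. y \<noteq> 0 \<longrightarrow> norm x \<le> norm y)}"

definition Co0 :: "(real ^ 24 \<Rightarrow> real ^ 24) set" where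
  "Co0 = {f. linear f \<and> (\<forall>x. norm (f x) = norm x) \<and> f ` leech = leech}"

primrec Useq :: "(real ^ 24) set \<Rightarrow> (nat \<Rightarrow> real ^ 24 \<Rightarrow> real ^ 24) \<Rightarrow> nat \<Rightarrow> (real ^ 24) set" where
  "Useq S gs 0 = {}"
| "Useq S gs (Suc j) = Useq S gs j \<union> gs (Suc j) ` S"

definition Sseq :: "(real ^ 24) set \<Rightarrow> (nat \<Rightarrow> real ^ 24 \<Rightarrow> real ^ 24) \<Rightarrow> nat \<Rightarrow> (real ^ 24) set" where
  "Sseq S gs j = gs j ` S - Useq S gs (j - 1)"

definition Ek :: "(real ^ 24) set \<Rightarrow> (nat \<Rightarrow> real ^ 24 \<Rightarrow> real ^ 24) \<Rightarrow> nat \<Rightarrow> real" where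
  "Ek S gs k = (\<Sum>g\<in>Co0. real (card (g ` S \<inter> Useq S gs k))) / real (card Co0)"

definition delta :: "(real ^ 24) set \<Rightarrow> (nat \<Rightarrow> real ^ 24 \<Rightarrow> real ^ 24) \<Rightarrow> nat \<Rightarrow> (real ^ 24 \<Rightarrow> real ^ 24) \<Rightarrow> real" where
  "delta S gs k g = real (card (g ` S \<inter> Useq S gs k)) - Ek S gs k"

definition Gminus :: "(real ^ 24) set \<Rightarrow> (nat \<Rightarrow> real ^ 24 \<Rightarrow> real ^ 24) \<Rightarrow> nat \<Rightarrow> (real ^ 24 \<Rightarrow> real ^ 24) set" where
  "Gminus S gs k = {g \<in> Co0. delta S gs k g < 0}"

definition floor_even :: "real \<Rightarrow> real" where
  "floor_even x = 2 * real_of_int \<lfloor>x / 2\<rfloor>"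

definition ceil_even :: "real \<Rightarrow> real" where
  "ceil_even x = 2 * real_of_int \<lceil>x / 2\<rceil>"

end

theory Submission
  imports Defs
begin

lemma card_even_antipodal:
  fixes A :: "'a::real_vector set"
  assumes "\<forall>x\<in>A. - x \<in> A" and "0 \<notin> A"
  shows "even (card A)"
proof (cases "finite A")
  case False thus ?thesis by simp
next
  case True
  show ?thesis using True assms
  proof (induction "card A" arbitrary: A rule: less_induct)
    case less
    show ?case
    proof (cases "A = {}")
      case True thus ?thesis by simp
    next
      case False
      then obtain x where x: "x \<in> A" by blast
      have nx: "- x \<in> A" using less.prems x by blast
      have ne: "x \<noteq> - x"
      proof
        assume h: "x = - x"
        have "2 *\<^sub>R x = 0" using h by (metis scaleR_2 eq_neg_iff_add_eq_0)
        hence "x = 0" by simp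
        thus False using x less.prems(3) by simp
      qed
      define B where "B = A - {x, -x}"
      have c2: "card {x, -x} = 2" using ne by simp
      have "card {x, -x} \<le> card A" using less.prems(1) x nx by (intro card_mono) auto
      hence c2': "card A \<ge> 2" using c2 by simp
      have cB: "card A = card B + 2" unfolding B_def using less.prems(1) x nx c2 c2'
        by (subst card_Diff_subset) auto
      have "even (card B)"
        apply (rule less.hyps)
        using cB apply simp
        unfolding B_def using less.prems by auto
      thus ?thesis using cB by simp
    qed
  qed
qed

lemma lin_antipodal:
  assumes "linear f" "\<forall>x\<in>S. - x \<in> S"
  shows "\<forall>y\<in>f ` S. - y \<in> f ` S"
  using assms by (auto simp: linear_neg[symmetric, OF assms(1)])

lemma Useq_antipodal:
  assumes "\<forall>j. 1 \<le> j \<and> j \<le> k \<longrightarrow> linear (gs j)" "\<forall>x\<in>S. - x \<in> S"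
  shows "\<forall>y\<in>Useq S gs k. - y \<in> Useq S gs k"
  using assms
proof (induction k)
  case 0 thus ?case by simp
next
  case (Suc k)
  have a: "\<forall>y\<in>Useq S gs k. - y \<in> Useq S gs k" using Suc by auto
  have b: "\<forall>y\<in>gs (Suc k) ` S. - y \<in> gs (Suc k) ` S"
    using lin_antipodal[of "gs (Suc k)" S] Suc.prems by auto
  show ?case using a b by auto
qed

theorem lemma4p9:
  fixes S :: "(real ^ 24) set" and gs :: "nat \<Rightarrow> real ^ 24 \<Rightarrow> real ^ 24" and k :: nat
  assumes S_sub: "S \<subseteq> leech_min"
    and S_antipodal: "\<forall>x\<in>S. - x \<in> S"
    and S_inner: "\<forall>x\<in>S. \<forall>y\<in>S. x \<noteq> y \<longrightarrow> inner x y \<le> 1"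
    and k_pos: "k \<ge> 1"
    and g1: "gs 1 = id"
    and gs_Co0: "\<forall>j. 2 \<le> j \<and> j \<le> k \<longrightarrow> gs j \<in> Co0"
    and S_large: "\<forall>j. 2 \<le> j \<and> j \<le> k \<longrightarrow>
       real (card (Sseq S gs j)) \<ge>
         real (card S) * (1 - (\<Sum>i\<in>{1..<j}. real (card (Sseq S gs i))) / real (card leech_min))"
    and max_hyp: "Max ((\<lambda>g. \<bar>delta S gs k g\<bar>) ` Gminus S gs k)
                    = Ek S gs k - floor_even (Ek S gs k)"
  shows "real (card (Gminus S gs k)) \<ge>
           real (card Co0) / 2 * (ceil_even (Ek S gs k) - Ek S gs k)"
proof (cases "finite Co0")
  case False thus ?thesis by (simp add: Ek_def ceil_even_def)
next
  case fin: True
  define U where "U = Useq S gs k"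
  define c where "c g = real (card (g ` S \<inter> U))" for g
  define E where "E = Ek S gs k"
  define n where "n = real (card Co0)"
  define G where "G = Gminus S gs k"
  have idC: "id \<in> Co0" unfolding Co0_def by (simp add: linear_id)
  have npos: "n > 0" unfolding n_def using fin idC card_gt_0_iff by auto
  have Edef: "E = (\<Sum>g\<in>Co0. c g) / n" unfolding E_def Ek_def c_def U_def n_def by simp
  have dl: "delta S gs k g = c g - E" for g unfolding delta_def c_def U_def E_def by simp
  have lin: "\<forall>j. 1 \<le> j \<and> j \<le> k \<longrightarrow> linear (gs j)"
  proof (intro allI impI)
    fix j assume "1 \<le> j \<and> j \<le> k"
    then show "linear (gs j)"
      using g1 gs_Co0 by (cases "j = 1") (auto simp: Co0_def linear_id)
  qed
  have Uanti: "\<forall>y\<in>U. - y \<in> U" unfolding U_def using Useq_antipodal[OF lin S_antipodal] .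
  have ceven: "\<exists>m::int. c g = 2 * real_of_int m" if g: "g \<in> Co0" for g
  proof -
    have lg: "linear g" and ng: "\<forall>x. norm (g x) = norm x" using g by (auto simp: Co0_def)
    have S0: "0 \<notin> S" using S_sub by (auto simp: leech_min_def)
    have "0 \<notin> g ` S" using S0 ng by (metis imageE norm_eq_zero)
    moreover have "\<forall>y\<in>g ` S \<inter> U. - y \<in> g ` S \<inter> U"
      using lin_antipodal[OF lg S_antipodal] Uanti by auto
    ultimately have "even (card (g ` S \<inter> U))"
      using card_even_antipodal[of "g ` S \<inter> U"] by auto
    then obtain m where "card (g ` S \<inter> U) = 2 * m" by (auto elim: evenE)
    thus ?thesis unfolding c_def by (intro exI[of _ "int m"]) simp
  qed
  define a where "a = E - floor_even E"
  define b where "b = ceil_even E - E"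
  have "E/2 \<le> of_int (ceiling (E/2))" by (rule le_of_int_ceiling)
  hence b0: "b \<ge> 0" unfolding b_def ceil_even_def by linarith
  have pos: "c g - E \<ge> b" if gC: "g \<in> Co0" and gG: "g \<notin> G" for g
  proof -
    have ge: "c g \<ge> E" using gC gG unfolding G_def Gminus_def dl by auto
    obtain m where m: "c g = 2 * real_of_int m" using ceven gC by blast
    show ?thesis
    proof (cases "c g = E")
      case True
      then have "E/2 = of_int m" using m by simp
      then have "ceiling (E/2) = m" by simp
      then show ?thesis using True m unfolding b_def ceil_even_def by simp
    next
      case False
      then have "real_of_int m > E/2" using ge m by simp
      then have "ceiling (E/2) \<le> m" by (simp add: ceiling_le_iff)
      then have "real_of_int (ceiling (E/2)) \<le> m" by linarith
      then show ?thesis using m unfolding b_def ceil_even_def by simp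
    qed
  qed
  have finG: "finite G" unfolding G_def Gminus_def using fin by simp
  have neg: "c g - E \<ge> - a" if "g \<in> G" for g
  proof -
    have "\<bar>delta S gs k g\<bar> \<le> Max ((\<lambda>g. \<bar>delta S gs k g\<bar>) ` Gminus S gs k)"
      using finG that unfolding G_def by (intro Max_ge) auto
    thus ?thesis using max_hyp unfolding a_def E_def[symmetric] dl by linarith
  qed
  have GC: "G \<subseteq> Co0" unfolding G_def Gminus_def by auto
  have sum0: "(\<Sum>g\<in>Co0. c g - E) = 0"
    using npos by (simp add: sum_subtractf Edef n_def)
  have cG1: "card (Co0 - G) = card Co0 - card G" using fin GC by (simp add: card_Diff_subset finite_subset)
  have cG2: "card G \<le> card Co0" using fin GC card_mono by blast
  have key: "0 \<ge> - (real (card G) * a) + (n * b - real (card G) * b)"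
  proof -
    have "(\<Sum>g\<in>Co0 - G. b) = (n - real (card G)) * b"
      using cG1 cG2
      unfolding n_def by (simp add: of_nat_diff)
    hence e2: "(\<Sum>g\<in>Co0 - G. b) = n * b - real (card G) * b" by (simp add: algebra_simps)
    have "(\<Sum>g\<in>Co0. c g - E) = (\<Sum>g\<in>G. c g - E) + (\<Sum>g\<in>Co0 - G. c g - E)"
      using fin GC by (metis add.commute sum.subset_diff)
    moreover have "(\<Sum>g\<in>G. c g - E) \<ge> - (real (card G) * a)"
      using sum_mono[of G "\<lambda>g. - a" "\<lambda>g. c g - E"] neg by simp
    moreover have "(\<Sum>g\<in>Co0 - G. c g - E) \<ge> (\<Sum>g\<in>Co0 - G. b)" by (intro sum_mono pos) auto
    ultimately show ?thesis using sum0 e2 by linarith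
  qed
  have cases2: "a + b = 2 \<or> b = 0"
  proof (cases "E/2 \<in> \<int>")
    case True
    then obtain z where "E/2 = of_int z" by (auto elim: Ints_cases)
    then show ?thesis unfolding b_def ceil_even_def by simp
  next
    case False
    then have "ceiling (E/2) = floor (E/2) + 1"
      by (metis ceiling_altdef floor_of_int Ints_of_int)
    then show ?thesis unfolding a_def b_def ceil_even_def floor_even_def by simp
  qed
  have "real (card G) \<ge> n / 2 * b"
  proof (cases "b = 0")
    case True thus ?thesis by simp
  next
    case False
    then have "a + b = 2" using cases2 by simp
    then have "real (card G) * a + real (card G) * b = 2 * real (card G)"
      by (metis distrib_left mult.commute)
    then show ?thesis using key by linarith
  qed
  thus ?thesis unfolding G_def n_def b_def E_def .
qed

end
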